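(* Fix a set $\mathcal{X}$, a measure space $\mathcal{Y}$, and a real number $\alpha>1$. Suppose that for each $y\in\mathcal{Y}$ a topology is given on the fibre $\mathcal{X}\times\{y\}$, and that $\phi:\mathcal{X}\to\mathcal{X}$ is a function such that the induced map $(x,y)\mapsto(\phi(x),y)$ is continuous on each such fibre. Suppose further that $\gamma:\mathcal{X}\times\mathcal{Y}\to\mathbb{R}$ is a function which (1) is bounded; (2) is continuous on the fibres of $\mathcal{X}\times\mathcal{Y}\to\mathcal{Y}$; (3) is measurable on the fibres of $\mathcal{X}\times\mathcal{Y}\to\mathcal{X}$; and (4) vanishes off $\mathcal{X}\times W$ for some set $W\subseteq\mathcal{Y}$ of finite measure. Then there exists a unique bounded function $\hat{\gamma}:\mathcal{X}\times\mathcal{Y}\to\mathbb{R}$, continuous in the first coordinate and integrable in the second, with \[\gamma(x,y)=\hat{\gamma}(\phi(x),y)-\alpha\hat{\gamma}(x,y)\] for all $x\in\mathcal{X}$ and $y\in\mathcal{Y}$. *)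

theory Defs
  imports "HOL-Analysis.Analysis"
begin

end

theory Submission
  imports Defs
begin

theorem mainTheorem12:
  fixes X :: "'a set" and M :: "'b measure" and \<alpha> :: real
    and T :: "'b \<Rightarrow> 'a topology" and \<phi> :: "'a \<Rightarrow> 'a"
    and \<gamma> :: "'a \<Rightarrow> 'b \<Rightarrow> real"
  assumes alpha: "\<alpha> > 1"
    and top: "\<forall>y\<in>space M. topspace (T y) = X"
    and phi_cont: "\<forall>y\<in>space M. continuous_map (T y) (T y) \<phi>"
    and bounded: "\<exists>B. \<forall>x\<in>X. \<forall>y\<in>space M. \<bar>\<gamma> x y\<bar> \<le> B"
    and cont: "\<forall>y\<in>space M. continuous_map (T y) euclideanreal (\<lambda>x. \<gamma> x y)"
    and meas: "\<forall>x\<in>X. (\<lambda>y. \<gamma> x y) \<in> borel_measurable M"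
    and supp: "\<exists>W\<in>sets M. emeasure M W < \<infinity> \<and> (\<forall>x\<in>X. \<forall>y\<in>space M - W. \<gamma> x y = 0)"
  shows "\<exists>g :: 'a \<Rightarrow> 'b \<Rightarrow> real.
           ((\<exists>B. \<forall>x\<in>X. \<forall>y\<in>space M. \<bar>g x y\<bar> \<le> B)
            \<and> (\<forall>y\<in>space M. continuous_map (T y) euclideanreal (\<lambda>x. g x y))
            \<and> (\<forall>x\<in>X. integrable M (\<lambda>y. g x y))
            \<and> (\<forall>x\<in>X. \<forall>y\<in>space M. \<gamma> x y = g (\<phi> x) y - \<alpha> * g x y))
         \<and> (\<forall>g' :: 'a \<Rightarrow> 'b \<Rightarrow> real.
              ((\<exists>B. \<forall>x\<in>X. \<forall>y\<in>space M. \<bar>g' x y\<bar> \<le> B)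
               \<and> (\<forall>y\<in>space M. continuous_map (T y) euclideanreal (\<lambda>x. g' x y))
               \<and> (\<forall>x\<in>X. integrable M (\<lambda>y. g' x y))
               \<and> (\<forall>x\<in>X. \<forall>y\<in>space M. \<gamma> x y = g' (\<phi> x) y - \<alpha> * g' x y))
              \<longrightarrow> (\<forall>x\<in>X. \<forall>y\<in>space M. g' x y = g x y))"
proof -
  have phiX: "\<phi> x \<in> X" if "y \<in> space M" "x \<in> X" for x y
    using phi_cont top that by (metis continuous_map_def image_subset_iff_funcset Pi_iff)
  have phinX: "(\<phi> ^^ n) x \<in> X" if "y \<in> space M" "x \<in> X" for x y n
    using that by (induction n) (auto intro: phiX)
  obtain B0 where B0: "\<And>x y. x \<in> X \<Longrightarrow> y \<in> space M \<Longrightarrow> \<bar>\<gamma> x y\<bar> \<le> B0" using bounded by blast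
  define B where "B = \<bar>B0\<bar>"
  have B: "\<And>x y. x \<in> X \<Longrightarrow> y \<in> space M \<Longrightarrow> \<bar>\<gamma> x y\<bar> \<le> B" "B \<ge> 0"
    unfolding B_def by (meson B0 abs_ge_self order_trans, simp)
  obtain W where W: "W \<in> sets M" "emeasure M W < \<infinity>" "\<And>x y. x\<in>X \<Longrightarrow> y\<in>space M - W \<Longrightarrow> \<gamma> x y = 0"
    using supp by blast
  define c where "c = 1 / \<alpha>"
  have c: "0 < c" "c < 1" "\<alpha> * c = 1" using alpha by (auto simp: c_def)
  define a where "a n x y = c ^ (Suc n) * \<gamma> ((\<phi> ^^ n) x) y" for n x y
  define S where "S x y = (\<Sum>n. a n x y)" for x y
  define g where "g x y = - S x y" for x y
  have summM: "summable (\<lambda>n. B * c ^ Suc n)"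
    using c by (intro summable_mult summable_Suc_iff[THEN iffD2] summable_geometric) auto
  have abound: "norm (a n x y) \<le> B * c ^ Suc n" if "x \<in> X" "y \<in> space M" for n x y
    using B(1)[OF phinX[OF that(2) that(1)] that(2), of n] c
    by (auto simp: a_def abs_mult mult.commute intro: mult_left_mono)
  have summ: "summable (\<lambda>n. a n x y)" if "x \<in> X" "y \<in> space M" for x y
    by (rule summable_comparison_test'[OF summM, where N=0]) (rule abound[OF that])
  have Sbound: "\<bar>S x y\<bar> \<le> (\<Sum>n. B * c ^ Suc n)" if "x \<in> X" "y \<in> space M" for x y
  proof -
    have s1: "summable (\<lambda>n. norm (a n x y))"
      by (rule summable_comparison_test'[OF summM, where N=0]) (metis abound[OF that] real_norm_def abs_abs)
    have "norm (S x y) \<le> (\<Sum>n. norm (a n x y))" unfolding S_def by (rule summable_norm[OF s1])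
    also have "\<dots> \<le> (\<Sum>n. B * c ^ Suc n)" by (rule suminf_le[OF abound[OF that] s1 summM])
    finally show ?thesis by simp
  qed
  have rec: "S x y = c * \<gamma> x y + c * S (\<phi> x) y" if "x \<in> X" "y \<in> space M" for x y
  proof -
    have "(\<Sum>n. a (Suc n) x y) = S x y - a 0 x y"
      unfolding S_def by (rule suminf_split_head[OF summ[OF that]])
    moreover have "(\<lambda>n. a (Suc n) x y) = (\<lambda>n. c * a n (\<phi> x) y)"
      by (auto simp: a_def funpow_swap1 mult.assoc)
    moreover have "(\<Sum>n. c * a n (\<phi> x) y) = c * S (\<phi> x) y"
      unfolding S_def using summ[OF phiX[OF that(2) that(1)] that(2)] by (rule suminf_mult)
    ultimately show ?thesis by (simp add: a_def)
  qed
  have eq: "\<gamma> x y = g (\<phi> x) y - \<alpha> * g x y" if "x \<in> X" "y \<in> space M" for x y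
  proof -
    have "\<alpha> * S x y = \<alpha> * c * \<gamma> x y + \<alpha> * c * S (\<phi> x) y"
      using rec[OF that] by (simp add: algebra_simps)
    then show ?thesis using c(3) by (simp add: g_def)
  qed
  have gbound: "\<exists>B. \<forall>x\<in>X. \<forall>y\<in>space M. \<bar>g x y\<bar> \<le> B"
    using Sbound by (auto simp: g_def)
  have gcont: "continuous_map (T y) euclideanreal (\<lambda>x. g x y)" if y: "y \<in> space M" for y
  proof -
    have phin: "continuous_map (T y) (T y) (\<phi> ^^ n)" for n
      proof (induction n)
      case (Suc n)
      have "continuous_map (T y) (T y) (\<phi> \<circ> (\<phi> ^^ n))"
        by (rule continuous_map_compose[OF Suc phi_cont[rule_format, OF y]])
      then show ?case by (simp add: o_def)
    qed simp
    have an: "continuous_map (T y) euclideanreal (\<lambda>x. a n x y)" for n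
      unfolding a_def
      by (intro continuous_map_real_mult continuous_map_const[THEN iffD2]
          continuous_map_compose[OF phin cont[rule_format, OF y], unfolded o_def]) auto
    have ul: "uniform_limit X (\<lambda>N x. \<Sum>i<N. a i x y) (\<lambda>x. S x y) sequentially"
      unfolding S_def using abound y by (intro Weierstrass_m_test[OF _ summM]) auto
    have "continuous_map (T y) Met_TC.mtopology (\<lambda>x. S x y)"
    proof (rule Met_TC.continuous_map_uniform_limit_alt[where F=sequentially])
      show "\<forall>\<^sub>F N in sequentially. continuous_map (T y) Met_TC.mtopology (\<lambda>x. \<Sum>i<N. a i x y)"
        using an by (auto intro!: always_eventually continuous_map_sum)
      show "\<And>e. 0 < e \<Longrightarrow> \<forall>\<^sub>F N in sequentially. \<forall>x\<in>topspace (T y). dist (\<Sum>i<N. a i x y) (S x y) < e"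
        using ul top y unfolding uniform_limit_iff by auto
    qed auto
    then show ?thesis unfolding g_def by (auto intro: continuous_map_minus)
  qed
  have gint: "integrable M (\<lambda>y. g x y)" if x: "x \<in> X" for x
  proof -
    have am: "(\<lambda>y. a n x y) \<in> borel_measurable M" for n
    proof (cases "space M = {}")
      case True then show ?thesis by (auto simp: measurable_def)
    next
      case False
      then obtain y where "y \<in> space M" by blast
      then have "(\<lambda>y. \<gamma> ((\<phi> ^^ n) x) y) \<in> borel_measurable M"
        using meas phinX[OF _ x] by blast
      then show ?thesis unfolding a_def by measurable
    qed
    have gm: "(\<lambda>y. g x y) \<in> borel_measurable M"
      unfolding g_def S_def using am by measurable
    define K where "K = (\<Sum>n. B * c ^ Suc n)"
    have "integrable M (\<lambda>y. K * indicator W y :: real)"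
      using W by (intro integrable_mult_right integrable_real_indicator) auto
    moreover have "AE y in M. norm (g x y) \<le> norm (K * indicator W y :: real)"
    proof (rule AE_I2)
      fix y assume y: "y \<in> space M"
      show "norm (g x y) \<le> norm (K * indicator W y :: real)"
      proof (cases "y \<in> W")
        case True
        then show ?thesis using Sbound[OF x y] by (simp add: g_def K_def)
      next
        case False
        then have "\<And>n. a n x y = 0" using W(3)[OF phinX[OF y x]] y by (simp add: a_def)
        then show ?thesis by (simp add: g_def S_def)
      qed
    qed
    ultimately show ?thesis by (rule Bochner_Integration.integrable_bound[OF _ gm])
  qed
  have uniq: "g' x y = g x y"
    if g'B: "\<exists>B. \<forall>x\<in>X. \<forall>y\<in>space M. \<bar>g' x y\<bar> \<le> B"
      and g'eq: "\<forall>x\<in>X. \<forall>y\<in>space M. \<gamma> x y = g' (\<phi> x) y - \<alpha> * g' x y"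
      and x: "x \<in> X" and y: "y \<in> space M" for g' x y
  proof -
    define d where "d x = g' x y - g x y" for x
    obtain B1 where B1: "\<And>x. x \<in> X \<Longrightarrow> \<bar>g' x y\<bar> \<le> B1" using g'B y by blast
    obtain B2 where B2: "\<And>x. x \<in> X \<Longrightarrow> \<bar>g x y\<bar> \<le> B2" using gbound y by blast
    have dB: "\<bar>d z\<bar> \<le> B1 + B2" if "z \<in> X" for z
      using B1[OF that] B2[OF that] by (simp add: d_def)
    have dphi: "d (\<phi> z) = \<alpha> * d z" if "z \<in> X" for z
      using g'eq[rule_format, OF that y] eq[OF that y] unfolding d_def by (simp add: algebra_simps)
    have dn: "d ((\<phi> ^^ n) x) = \<alpha> ^ n * d x" for n
    proof (induction n)
      case (Suc n)
      then show ?case using dphi[OF phinX[OF y x, of n]] by simp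
    qed simp
    show ?thesis
    proof (rule ccontr)
      assume "g' x y \<noteq> g x y"
      then have pos: "\<bar>d x\<bar> > 0" by (simp add: d_def)
      obtain n where n: "(B1 + B2) / \<bar>d x\<bar> < \<alpha> ^ n"
        using real_arch_pow[OF alpha] by blast
      then have "B1 + B2 < \<alpha> ^ n * \<bar>d x\<bar>" using pos by (simp add: divide_less_eq)
      also have "\<dots> = \<bar>d ((\<phi> ^^ n) x)\<bar>" using alpha by (simp add: dn abs_mult)
      also have "\<dots> \<le> B1 + B2" by (rule dB[OF phinX[OF y x]])
      finally show False by simp
    qed
  qed
  show ?thesis
    apply (rule exI[of _ g])
    using gbound gcont gint eq uniq by blast
qed

end
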